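(* Let $\Sigma$ be a signature (under the standing assumptions below) and let $(F,\sigma,\theta),(F',\sigma',\theta'):\mathcal F_\Sigma\to\mathcal C$ be two cwf morphisms into a cwf $\mathcal C$ such that: $F(\Gamma)=F'(\Gamma)$ whenever $(\Gamma,S)\in\Sigma$ or $(\Gamma,f,U)\in\Sigma$; $\sigma(\Gamma,S(\mathrm{OV}(\Gamma)))=\sigma'(\Gamma,S(\mathrm{OV}(\Gamma)))$ for all $(\Gamma,S)\in\Sigma$; and $\sigma(\Gamma,U)=\sigma'(\Gamma,U)$ and $\theta(\Gamma,U,f(\mathrm{OV}(\Gamma)))=\theta'(\Gamma,U,f(\mathrm{OV}(\Gamma)))$ for all $(\Gamma,f,U)\in\Sigma$. Then $(F,\sigma,\theta)=(F',\sigma',\theta')$.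
   Context: Standing assumptions: the variable set is $V=\{1,2,3,\ldots\}$ with $\mathsf{fr}(X)=\max(\{1\}\cup\{x+1:x\in X\})$ and $\varphi(X)=\{\mathsf{fr}(X)\}$ for finite $X\subseteq V$; all declarations of signatures are on standard form, written $(\Gamma,S)$ (type) and $(\Gamma,f,U)$ (function). Preelements are terms built from variables and function symbols; a pretype is $S(t_1,\ldots,t_n)$ with $S$ a type symbol and $t_i$ preelements; $\mathrm{V}(E)$ is the set of variables of $E$; $E[\bar a/\bar x]$ is simultaneous substitution. A precontext is $\Gamma=x_1:A_1,\ldots,x_n:A_n$ with $x_k=\mathsf{fr}(\{x_1,\ldots,x_{k-1}\})$ and $\mathrm{V}(A_k)\subseteq\{x_1,\ldots,x_{k-1}\}$; $\mathrm{OV}(\Gamma)=x_1,\ldots,x_n$; $\mathrm{fresh}(\Gamma)=\mathsf{fr}(\{x_1,\ldots,x_n\})$; $E[\bar a/\Gamma]=E[\bar a/x_1,\ldots,x_n]$. A presignature is a set of declarations $(\Gamma,S)$ ($S$ a type symbol) and $(\Gamma,f,U)$ ($f$ a function symbol, $U$ a pretype with $\mathrm{V}(U)\subseteq\mathrm{V}(\Gamma)$), each symbol declared at most once. $\mathcal{J}(\Sigma)$ is the smallest set of judgements ("$\Gamma$ context", "$A$ type $(\Gamma)$", "$a:A\ (\Gamma)$") closed under: (R1) $\langle\rangle$ context; (R2) from $\Gamma$ context and $A$ type $(\Gamma)$ infer $\Gamma,\mathrm{fresh}(\Gamma):A$ context; (R3) from $x_1:A_1,\ldots,x_n:A_n$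 context infer $x_i:A_i\ (x_1:A_1,\ldots,x_n:A_n)$; (R4) if $(\Gamma,S)\in\Sigma$ and $\bar a:\Delta\to\Gamma$ infer $S(\bar a)$ type $(\Delta)$; (R5) if $(\Gamma,f,U)\in\Sigma$, $\bar a:\Delta\to\Gamma$ and $U[\bar a/\Gamma]$ type $(\Delta)$ infer $f(\bar a):U[\bar a/\Gamma]\ (\Delta)$; where, for $\Gamma=x_1:A_1,\ldots,x_n:A_n$, "$\bar a:\Delta\to\Gamma$" abbreviates the judgements $\Delta$ context, $\Gamma$ context, $a_k:A_k[a_1,\ldots,a_{k-1}/x_1,\ldots,x_{k-1}]\ (\Delta)$ ($k=1,\ldots,n$). $\Sigma$ is a signature if ($\Gamma$ context)$\in\mathcal{J}(\Sigma)$ for $(\Gamma,S)\in\Sigma$ and ($U$ type $(\Gamma)$)$\in\mathcal{J}(\Sigma)$ for $(\Gamma,f,U)\in\Sigma$. A category with families (cwf) consists of: a category $\mathcal C$ with a terminal object $\top$; for each object $\Gamma$ a class $\mathrm{Ty}(\Gamma)$, and for $f:\Delta\to\Gamma$ a function $A\mapsto A\{f\}:\mathrm{Ty}(\Gamma)\to\mathrm{Ty}(\Delta)$ with $A\{1\}=A$, $A\{f\circ g\}=A\{f\}\{g\}$; for $A\in\mathrm{Ty}(\Gamma)$ an object $\Gamma.A$ and a morphism $\mathrm{p}(A)=\mathrm{p}_\Gamma(A):\Gamma.A\to\Gamma$; for $A\in\mathrm{Ty}(\Gamma)$ a class $\mathrm{Tm}(\Gamma,A)$ and for $f:\Delta\to\Gamma$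 a function $a\mapsto a\{f\}:\mathrm{Tm}(\Gamma,A)\to\mathrm{Tm}(\Delta,A\{f\})$ with $a\{1\}=a$, $a\{f\circ g\}=a\{f\}\{g\}$; for each $A\in\mathrm{Ty}(\Gamma)$ an element $\mathrm{v}_A\in\mathrm{Tm}(\Gamma.A,A\{\mathrm{p}(A)\})$; for $f:\Delta\to\Gamma$ and $a\in\mathrm{Tm}(\Delta,A\{f\})$ a morphism $\langle f,a\rangle_A:\Delta\to\Gamma.A$ such that $\mathrm{p}(A)\circ\langle f,a\rangle_A=f$, $\mathrm{v}_A\{\langle f,a\rangle_A\}=a$, $\langle\mathrm{p}(A)\circ h,\mathrm{v}_A\{h\}\rangle_A=h$ for every $h:\Delta\to\Gamma.A$, and $\langle f,a\rangle_A\circ g=\langle f\circ g,a\{g\}\rangle_A$. A cwf morphism $(F,\sigma,\theta):\mathcal C\to\mathcal C'$ consists of a functor $F$ with $F(\top)=\top'$; functions $\sigma_\Gamma:\mathrm{Ty}(\Gamma)\to\mathrm{Ty}'(F\Gamma)$ with $\sigma_\Delta(A\{f\})=\sigma_\Gamma(A)\{Ff\}$ for $f:\Delta\to\Gamma$, such that $F(\Gamma.A)=F\Gamma.\sigma_\Gamma(A)$ and $F(\mathrm{p}_\Gamma(A))=\mathrm{p}_{F\Gamma}(\sigma_\Gamma(A))$; and functions $\theta_{\Gamma,A}:\mathrm{Tm}(\Gamma,A)\to\mathrm{Tm}'(F\Gamma,\sigma_\Gamma(A))$ with $\theta_{\Delta,A\{f\}}(a\{f\})=\theta_{\Gamma,A}(a)\{Ff\}$,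 $\theta_{\Gamma.A,A\{\mathrm{p}(A)\}}(\mathrm{v}_A)=\mathrm{v}_{\sigma_\Gamma(A)}$, and $F(\langle f,a\rangle_A)=\langle Ff,\theta_{\Delta,A\{f\}}(a)\rangle_{\sigma_\Gamma(A)}$ for $f:\Delta\to\Gamma$, $a\in\mathrm{Tm}(\Delta,A\{f\})$. The cwf $\mathcal F_\Sigma$: objects are precontexts $\Gamma$ with ($\Gamma$ context)$\in\mathcal{J}(\Sigma)$; morphisms $\Delta\to\Gamma$ are triples $(\Delta,\Gamma,\bar a)$ with $\bar a:\Delta\to\Gamma$ a context map in $\mathcal{J}(\Sigma)$; composition $(\Gamma,\Theta,\bar t)\circ(\Delta,\Gamma,\bar s)=(\Delta,\Theta,(t_1[\bar s/\Gamma],\ldots,t_k[\bar s/\Gamma]))$; identity $(\Gamma,\Gamma,\mathrm{OV}(\Gamma))$; terminal object $\langle\rangle$. $\mathrm{Ty}(\Gamma)=\{(\Gamma,A): (A\text{ type }(\Gamma))\in\mathcal{J}(\Sigma)\}$ with $(\Gamma,A)\{(\Delta,\Gamma,\bar a)\}=(\Delta,A[\bar a/\Gamma])$; $\mathrm{Tm}(\Gamma,(\Gamma,A))=\{((\Gamma,A),a): (a:A\ (\Gamma))\in\mathcal{J}(\Sigma)\}$ with $((\Gamma,A),a)\{(\Delta,\Gamma,\bar a)\}=((\Delta,A[\bar a/\Gamma]),a[\bar a/\Gamma])$; for $\mathrm S=(\Gamma,S)$: $\Gamma.\mathrm S=\langle\Gamma,\mathrm{fresh}(\Gamma):S\rangle$,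 $\mathrm{p}_\Gamma(\mathrm S)=(\Gamma.\mathrm S,\Gamma,\mathrm{OV}(\Gamma))$, $\mathrm{v}_{\mathrm S}=((\Gamma.\mathrm S,S),\mathrm{fresh}(\Gamma))$, $\langle(\Delta,\Gamma,\bar s),((\Delta,S[\bar s/\Gamma]),b)\rangle_{\mathrm S}=(\Delta,\Gamma.\mathrm S,(\bar s,b))$. For a cwf morphism $(F,\sigma,\theta)$ out of $\mathcal F_\Sigma$ write $\sigma(\Gamma,A)$ for $\sigma_\Gamma((\Gamma,A))$ and $\theta(\Gamma,A,a)$ for $\theta_{\Gamma,(\Gamma,A)}(((\Gamma,A),a))$. *)

theory Defs
  imports Main
begin

text \<open>Variables are natural numbers; the variable set V is the positive naturals
  (variable 0 never occurs in any derivable judgement). 'f are function symbols,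
  's are type symbols.\<close>

datatype 'f pre = Var nat | App 'f "'f pre list"

datatype ('s, 'f) pty = PTy 's "'f pre list"

type_synonym ('s, 'f) ctx = "(nat \<times> ('s, 'f) pty) list"

fun vars_pre :: "'f pre \<Rightarrow> nat set" where
  "vars_pre (Var x) = {x}"
| "vars_pre (App f ts) = (\<Union>t\<in>set ts. vars_pre t)"

fun vars_pty :: "('s, 'f) pty \<Rightarrow> nat set" where
  "vars_pty (PTy S ts) = (\<Union>t\<in>set ts. vars_pre t)"

definition vars_ctx :: "('s, 'f) ctx \<Rightarrow> nat set" where
  "vars_ctx \<Gamma> = set (map fst \<Gamma>) \<union> (\<Union>p\<in>set \<Gamma>. vars_pty (snd p))"

definition fr :: "nat set \<Rightarrow> nat" where
  "fr X = Max (insert 1 (Suc ` X))"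

definition OV :: "('s, 'f) ctx \<Rightarrow> nat list" where
  "OV \<Gamma> = map fst \<Gamma>"

definition fresh :: "('s, 'f) ctx \<Rightarrow> nat" where
  "fresh \<Gamma> = fr (set (OV \<Gamma>))"

definition precontext :: "('s, 'f) ctx \<Rightarrow> bool" where
  "precontext \<Gamma> \<longleftrightarrow>
     (\<forall>k < length \<Gamma>. fst (\<Gamma> ! k) = fr (set (take k (OV \<Gamma>)))
                     \<and> vars_pty (snd (\<Gamma> ! k)) \<subseteq> set (take k (OV \<Gamma>)))"

fun subst_pre :: "(nat \<Rightarrow> 'f pre option) \<Rightarrow> 'f pre \<Rightarrow> 'f pre" where
  "subst_pre \<rho> (Var x) = (case \<rho> x of Some t \<Rightarrow> t | None \<Rightarrow> Var x)"
| "subst_pre \<rho> (App f ts) = App f (map (subst_pre \<rho>) ts)"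

fun subst_pty :: "(nat \<Rightarrow> 'f pre option) \<Rightarrow> ('s, 'f) pty \<Rightarrow> ('s, 'f) pty" where
  "subst_pty \<rho> (PTy S ts) = PTy S (map (subst_pre \<rho>) ts)"

definition sb :: "nat list \<Rightarrow> 'f pre list \<Rightarrow> nat \<Rightarrow> 'f pre option" where
  "sb xs as = map_of (zip xs as)"

definition sbc :: "('s, 'f) ctx \<Rightarrow> 'f pre list \<Rightarrow> nat \<Rightarrow> 'f pre option" where
  "sbc \<Gamma> as = sb (OV \<Gamma>) as"

datatype ('s, 'f) decl = DTy "('s, 'f) ctx" 's | DFun "('s, 'f) ctx" 'f "('s, 'f) pty"

definition presignature :: "('s, 'f) decl set \<Rightarrow> bool" where
  "presignature \<Sigma> \<longleftrightarrow>
     (\<forall>\<Gamma> S. DTy \<Gamma> S \<in> \<Sigma> \<longrightarrow> precontext \<Gamma>)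
   \<and> (\<forall>\<Gamma> f U. DFun \<Gamma> f U \<in> \<Sigma> \<longrightarrow> precontext \<Gamma> \<and> vars_pty U \<subseteq> vars_ctx \<Gamma>)
   \<and> (\<forall>\<Gamma> \<Gamma>' S. DTy \<Gamma> S \<in> \<Sigma> \<longrightarrow> DTy \<Gamma>' S \<in> \<Sigma> \<longrightarrow> \<Gamma> = \<Gamma>')
   \<and> (\<forall>\<Gamma> \<Gamma>' f U U'. DFun \<Gamma> f U \<in> \<Sigma> \<longrightarrow> DFun \<Gamma>' f U' \<in> \<Sigma> \<longrightarrow> \<Gamma> = \<Gamma>' \<and> U = U')"

datatype ('s, 'f) judg =
    JCtx "('s, 'f) ctx"
  | JType "('s, 'f) ctx" "('s, 'f) pty"
  | JTerm "('s, 'f) ctx" "'f pre" "('s, 'f) pty"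

definition cmap_in :: "('s, 'f) judg set \<Rightarrow> ('s, 'f) ctx \<Rightarrow> ('s, 'f) ctx \<Rightarrow> 'f pre list \<Rightarrow> bool" where
  "cmap_in J \<Delta> \<Gamma> as \<longleftrightarrow>
     JCtx \<Delta> \<in> J \<and> JCtx \<Gamma> \<in> J \<and> length as = length \<Gamma>
   \<and> (\<forall>k < length \<Gamma>. JTerm \<Delta> (as ! k)
          (subst_pty (sb (take k (OV \<Gamma>)) (take k as)) (snd (\<Gamma> ! k))) \<in> J)"


text \<open>In R4 and R5 the premise "a : \<Delta> \<rightarrow> \<Gamma>" is written out (it is cmap_in (Jdg \<Sigma>) \<Delta> \<Gamma> as).\<close>
inductive_set Jdg :: "('s, 'f) decl set \<Rightarrow> ('s, 'f) judg set" for \<Sigma> where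
  R1: "JCtx [] \<in> Jdg \<Sigma>"
| R2: "JCtx \<Gamma> \<in> Jdg \<Sigma> \<Longrightarrow> JType \<Gamma> A \<in> Jdg \<Sigma> \<Longrightarrow> JCtx (\<Gamma> @ [(fresh \<Gamma>, A)]) \<in> Jdg \<Sigma>"
| R3: "JCtx \<Gamma> \<in> Jdg \<Sigma> \<Longrightarrow> i < length \<Gamma> \<Longrightarrow> JTerm \<Gamma> (Var (fst (\<Gamma> ! i))) (snd (\<Gamma> ! i)) \<in> Jdg \<Sigma>"
| R4: "DTy \<Gamma> S \<in> \<Sigma> \<Longrightarrow> JCtx \<Delta> \<in> Jdg \<Sigma> \<Longrightarrow> JCtx \<Gamma> \<in> Jdg \<Sigma> \<Longrightarrow> length as = length \<Gamma>
       \<Longrightarrow> (\<forall>k < length \<Gamma>. JTerm \<Delta> (as ! k)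
             (subst_pty (sb (take k (OV \<Gamma>)) (take k as)) (snd (\<Gamma> ! k))) \<in> Jdg \<Sigma>)
       \<Longrightarrow> JType \<Delta> (PTy S as) \<in> Jdg \<Sigma>"
| R5: "DFun \<Gamma> f U \<in> \<Sigma> \<Longrightarrow> JCtx \<Delta> \<in> Jdg \<Sigma> \<Longrightarrow> JCtx \<Gamma> \<in> Jdg \<Sigma> \<Longrightarrow> length as = length \<Gamma>
       \<Longrightarrow> (\<forall>k < length \<Gamma>. JTerm \<Delta> (as ! k)
             (subst_pty (sb (take k (OV \<Gamma>)) (take k as)) (snd (\<Gamma> ! k))) \<in> Jdg \<Sigma>)
       \<Longrightarrow> JType \<Delta> (subst_pty (sbc \<Gamma> as) U) \<in> Jdg \<Sigma>
       \<Longrightarrow> JTerm \<Delta> (App f as) (subst_pty (sbc \<Gamma> as) U) \<in> Jdg \<Sigma>"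

definition signature :: "('s, 'f) decl set \<Rightarrow> bool" where
  "signature \<Sigma> \<longleftrightarrow> presignature \<Sigma>
     \<and> (\<forall>\<Gamma> S. DTy \<Gamma> S \<in> \<Sigma> \<longrightarrow> JCtx \<Gamma> \<in> Jdg \<Sigma>)
     \<and> (\<forall>\<Gamma> f U. DFun \<Gamma> f U \<in> \<Sigma> \<longrightarrow> JType \<Gamma> U \<in> Jdg \<Sigma>)"

text \<open>Objects 'o, morphisms 'm (each with a domain and codomain), types 't, terms 'e.
  comp g f is g \<circ> f. tsub A f = A{f}; esub a f = a{f}; ext \<Gamma> A = \<Gamma>.A;
  pr \<Gamma> A = p(A); var \<Gamma> A = v_A; pair f a A = \<langle>f,a\<rangle>_A.\<close>

record ('o, 'm, 't, 'e) cwf =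
  Ob :: "'o set"
  Mor :: "'m set"
  cdom :: "'m \<Rightarrow> 'o"
  ccod :: "'m \<Rightarrow> 'o"
  comp :: "'m \<Rightarrow> 'm \<Rightarrow> 'm"
  idm :: "'o \<Rightarrow> 'm"
  top :: "'o"
  Ty :: "'o \<Rightarrow> 't set"
  tsub :: "'t \<Rightarrow> 'm \<Rightarrow> 't"
  ext :: "'o \<Rightarrow> 't \<Rightarrow> 'o"
  pr :: "'o \<Rightarrow> 't \<Rightarrow> 'm"
  Tm :: "'o \<Rightarrow> 't \<Rightarrow> 'e set"
  esub :: "'e \<Rightarrow> 'm \<Rightarrow> 'e"
  var :: "'o \<Rightarrow> 't \<Rightarrow> 'e"
  pair :: "'m \<Rightarrow> 'e \<Rightarrow> 't \<Rightarrow> 'm"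

definition Hom :: "('o, 'm, 't, 'e, 'z) cwf_scheme \<Rightarrow> 'o \<Rightarrow> 'o \<Rightarrow> 'm set" where
  "Hom C \<Delta> \<Gamma> = {f \<in> Mor C. cdom C f = \<Delta> \<and> ccod C f = \<Gamma>}"

definition is_cwf :: "('o, 'm, 't, 'e, 'z) cwf_scheme \<Rightarrow> bool" where
  "is_cwf C \<longleftrightarrow>
     \<comment> \<open>category\<close>
     (\<forall>f \<in> Mor C. cdom C f \<in> Ob C \<and> ccod C f \<in> Ob C)
   \<and> (\<forall>\<Gamma> \<in> Ob C. idm C \<Gamma> \<in> Hom C \<Gamma> \<Gamma>)
   \<and> (\<forall>\<Theta> \<Delta> \<Gamma> f g. f \<in> Hom C \<Theta> \<Delta> \<longrightarrow> g \<in> Hom C \<Delta> \<Gamma> \<longrightarrow> comp C g f \<in> Hom C \<Theta> \<Gamma>)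
   \<and> (\<forall>f \<in> Mor C. comp C (idm C (ccod C f)) f = f \<and> comp C f (idm C (cdom C f)) = f)
   \<and> (\<forall>f g h. f \<in> Mor C \<longrightarrow> g \<in> Mor C \<longrightarrow> h \<in> Mor C \<longrightarrow> ccod C f = cdom C g \<longrightarrow> ccod C g = cdom C h
        \<longrightarrow> comp C h (comp C g f) = comp C (comp C h g) f)
     \<comment> \<open>terminal object\<close>
   \<and> top C \<in> Ob C \<and> (\<forall>\<Gamma> \<in> Ob C. \<exists>!f. f \<in> Hom C \<Gamma> (top C))
     \<comment> \<open>types and their substitution\<close>
   \<and> (\<forall>\<Delta> \<Gamma> f A. f \<in> Hom C \<Delta> \<Gamma> \<longrightarrow> A \<in> Ty C \<Gamma> \<longrightarrow> tsub C A f \<in> Ty C \<Delta>)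
   \<and> (\<forall>\<Gamma> \<in> Ob C. \<forall>A \<in> Ty C \<Gamma>. tsub C A (idm C \<Gamma>) = A)
   \<and> (\<forall>\<Theta> \<Delta> \<Gamma> f g A. f \<in> Hom C \<Delta> \<Gamma> \<longrightarrow> g \<in> Hom C \<Theta> \<Delta> \<longrightarrow> A \<in> Ty C \<Gamma>
        \<longrightarrow> tsub C A (comp C f g) = tsub C (tsub C A f) g)
     \<comment> \<open>comprehension\<close>
   \<and> (\<forall>\<Gamma> \<in> Ob C. \<forall>A \<in> Ty C \<Gamma>. ext C \<Gamma> A \<in> Ob C \<and> pr C \<Gamma> A \<in> Hom C (ext C \<Gamma> A) \<Gamma>)
     \<comment> \<open>terms and their substitution\<close>
   \<and> (\<forall>\<Delta> \<Gamma> f A a. f \<in> Hom C \<Delta> \<Gamma> \<longrightarrow> A \<in> Ty C \<Gamma> \<longrightarrow> a \<in> Tm C \<Gamma> A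
        \<longrightarrow> esub C a f \<in> Tm C \<Delta> (tsub C A f))
   \<and> (\<forall>\<Gamma> \<in> Ob C. \<forall>A \<in> Ty C \<Gamma>. \<forall>a \<in> Tm C \<Gamma> A. esub C a (idm C \<Gamma>) = a)
   \<and> (\<forall>\<Theta> \<Delta> \<Gamma> f g A a. f \<in> Hom C \<Delta> \<Gamma> \<longrightarrow> g \<in> Hom C \<Theta> \<Delta> \<longrightarrow> A \<in> Ty C \<Gamma> \<longrightarrow> a \<in> Tm C \<Gamma> A
        \<longrightarrow> esub C a (comp C f g) = esub C (esub C a f) g)
     \<comment> \<open>variable and extension\<close>
   \<and> (\<forall>\<Gamma> \<in> Ob C. \<forall>A \<in> Ty C \<Gamma>. var C \<Gamma> A \<in> Tm C (ext C \<Gamma> A) (tsub C A (pr C \<Gamma> A)))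
   \<and> (\<forall>\<Delta> \<Gamma> f A a. f \<in> Hom C \<Delta> \<Gamma> \<longrightarrow> A \<in> Ty C \<Gamma> \<longrightarrow> a \<in> Tm C \<Delta> (tsub C A f)
        \<longrightarrow> pair C f a A \<in> Hom C \<Delta> (ext C \<Gamma> A)
          \<and> comp C (pr C \<Gamma> A) (pair C f a A) = f
          \<and> esub C (var C \<Gamma> A) (pair C f a A) = a)
   \<and> (\<forall>\<Delta> \<Gamma> h A. \<Gamma> \<in> Ob C \<longrightarrow> A \<in> Ty C \<Gamma> \<longrightarrow> h \<in> Hom C \<Delta> (ext C \<Gamma> A)
        \<longrightarrow> pair C (comp C (pr C \<Gamma> A) h) (esub C (var C \<Gamma> A) h) A = h)
   \<and> (\<forall>\<Theta> \<Delta> \<Gamma> f g A a. f \<in> Hom C \<Delta> \<Gamma> \<longrightarrow> g \<in> Hom C \<Theta> \<Delta> \<longrightarrow> A \<in> Ty C \<Gamma> \<longrightarrow> a \<in> Tm C \<Delta> (tsub C A f)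
        \<longrightarrow> comp C (pair C f a A) g = pair C (comp C f g) (esub C a g) A)"

text \<open>A cwf morphism (F, \<sigma>, \<theta>): F is given by its object part Fo and morphism part Fm;
  \<sigma>_\<Gamma>(A) = Fs \<Gamma> A; \<theta>_{\<Gamma>,A}(a) = Ft \<Gamma> A a.\<close>

record ('o, 'm, 't, 'e, 'o2, 'm2, 't2, 'e2) cwf_mor =
  Fo :: "'o \<Rightarrow> 'o2"
  Fm :: "'m \<Rightarrow> 'm2"
  Fs :: "'o \<Rightarrow> 't \<Rightarrow> 't2"
  Ft :: "'o \<Rightarrow> 't \<Rightarrow> 'e \<Rightarrow> 'e2"

definition is_cwf_mor ::
  "('o, 'm, 't, 'e, 'z) cwf_scheme \<Rightarrow> ('o2, 'm2, 't2, 'e2, 'z2) cwf_scheme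
   \<Rightarrow> ('o, 'm, 't, 'e, 'o2, 'm2, 't2, 'e2) cwf_mor \<Rightarrow> bool" where
  "is_cwf_mor C D M \<longleftrightarrow>
     \<comment> \<open>F is a functor preserving the terminal object\<close>
     (\<forall>\<Gamma> \<in> Ob C. Fo M \<Gamma> \<in> Ob D)
   \<and> (\<forall>\<Delta> \<Gamma> f. f \<in> Hom C \<Delta> \<Gamma> \<longrightarrow> Fm M f \<in> Hom D (Fo M \<Delta>) (Fo M \<Gamma>))
   \<and> (\<forall>\<Gamma> \<in> Ob C. Fm M (idm C \<Gamma>) = idm D (Fo M \<Gamma>))
   \<and> (\<forall>f g. f \<in> Mor C \<longrightarrow> g \<in> Mor C \<longrightarrow> ccod C f = cdom C g
        \<longrightarrow> Fm M (comp C g f) = comp D (Fm M g) (Fm M f))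
   \<and> Fo M (top C) = top D
     \<comment> \<open>\<sigma>\<close>
   \<and> (\<forall>\<Gamma> \<in> Ob C. \<forall>A \<in> Ty C \<Gamma>. Fs M \<Gamma> A \<in> Ty D (Fo M \<Gamma>))
   \<and> (\<forall>\<Delta> \<Gamma> f A. f \<in> Hom C \<Delta> \<Gamma> \<longrightarrow> A \<in> Ty C \<Gamma>
        \<longrightarrow> Fs M \<Delta> (tsub C A f) = tsub D (Fs M \<Gamma> A) (Fm M f))
   \<and> (\<forall>\<Gamma> \<in> Ob C. \<forall>A \<in> Ty C \<Gamma>. Fo M (ext C \<Gamma> A) = ext D (Fo M \<Gamma>) (Fs M \<Gamma> A)
        \<and> Fm M (pr C \<Gamma> A) = pr D (Fo M \<Gamma>) (Fs M \<Gamma> A))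
     \<comment> \<open>\<theta>\<close>
   \<and> (\<forall>\<Gamma> \<in> Ob C. \<forall>A \<in> Ty C \<Gamma>. \<forall>a \<in> Tm C \<Gamma> A. Ft M \<Gamma> A a \<in> Tm D (Fo M \<Gamma>) (Fs M \<Gamma> A))
   \<and> (\<forall>\<Delta> \<Gamma> f A a. f \<in> Hom C \<Delta> \<Gamma> \<longrightarrow> A \<in> Ty C \<Gamma> \<longrightarrow> a \<in> Tm C \<Gamma> A
        \<longrightarrow> Ft M \<Delta> (tsub C A f) (esub C a f) = esub D (Ft M \<Gamma> A a) (Fm M f))
   \<and> (\<forall>\<Gamma> \<in> Ob C. \<forall>A \<in> Ty C \<Gamma>.
        Ft M (ext C \<Gamma> A) (tsub C A (pr C \<Gamma> A)) (var C \<Gamma> A) = var D (Fo M \<Gamma>) (Fs M \<Gamma> A))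
   \<and> (\<forall>\<Delta> \<Gamma> f A a. f \<in> Hom C \<Delta> \<Gamma> \<longrightarrow> A \<in> Ty C \<Gamma> \<longrightarrow> a \<in> Tm C \<Delta> (tsub C A f)
        \<longrightarrow> Fm M (pair C f a A) = pair D (Fm M f) (Ft M \<Delta> (tsub C A f) a) (Fs M \<Gamma> A))"

definition cwf_mor_eq ::
  "('o, 'm, 't, 'e, 'z) cwf_scheme \<Rightarrow> ('o, 'm, 't, 'e, 'o2, 'm2, 't2, 'e2) cwf_mor
   \<Rightarrow> ('o, 'm, 't, 'e, 'o2, 'm2, 't2, 'e2) cwf_mor \<Rightarrow> bool" where
  "cwf_mor_eq C M M' \<longleftrightarrow>
     (\<forall>\<Gamma> \<in> Ob C. Fo M \<Gamma> = Fo M' \<Gamma>)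
   \<and> (\<forall>f \<in> Mor C. Fm M f = Fm M' f)
   \<and> (\<forall>\<Gamma> \<in> Ob C. \<forall>A \<in> Ty C \<Gamma>. Fs M \<Gamma> A = Fs M' \<Gamma> A)
   \<and> (\<forall>\<Gamma> \<in> Ob C. \<forall>A \<in> Ty C \<Gamma>. \<forall>a \<in> Tm C \<Gamma> A. Ft M \<Gamma> A a = Ft M' \<Gamma> A a)"

type_synonym ('s, 'f) fmor = "('s, 'f) ctx \<times> ('s, 'f) ctx \<times> 'f pre list"
type_synonym ('s, 'f) fty = "('s, 'f) ctx \<times> ('s, 'f) pty"
type_synonym ('s, 'f) ftm = "('s, 'f) fty \<times> 'f pre"

definition FSigma :: "('s, 'f) decl set \<Rightarrow>
    (('s, 'f) ctx, ('s, 'f) fmor, ('s, 'f) fty, ('s, 'f) ftm) cwf" where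
  "FSigma \<Sigma> = \<lparr>
     Ob = {\<Gamma>. precontext \<Gamma> \<and> JCtx \<Gamma> \<in> Jdg \<Sigma>},
     Mor = {(\<Delta>, \<Gamma>, as). precontext \<Delta> \<and> precontext \<Gamma> \<and> cmap_in (Jdg \<Sigma>) \<Delta> \<Gamma> as},
     cdom = (\<lambda>(\<Delta>, \<Gamma>, as). \<Delta>),
     ccod = (\<lambda>(\<Delta>, \<Gamma>, as). \<Gamma>),
     comp = (\<lambda>(\<Gamma>, \<Theta>, ts) (\<Delta>, \<Gamma>', ss). (\<Delta>, \<Theta>, map (subst_pre (sbc \<Gamma>' ss)) ts)),
     idm = (\<lambda>\<Gamma>. (\<Gamma>, \<Gamma>, map Var (OV \<Gamma>))),
     top = [],
     Ty = (\<lambda>\<Gamma>. {(\<Gamma>', A). \<Gamma>' = \<Gamma> \<and> JType \<Gamma> A \<in> Jdg \<Sigma>}),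
     tsub = (\<lambda>(\<Gamma>', A) (\<Delta>, \<Gamma>, as). (\<Delta>, subst_pty (sbc \<Gamma> as) A)),
     ext = (\<lambda>\<Gamma> (\<Gamma>', S). \<Gamma> @ [(fresh \<Gamma>, S)]),
     pr = (\<lambda>\<Gamma> (\<Gamma>', S). (\<Gamma> @ [(fresh \<Gamma>, S)], \<Gamma>, map Var (OV \<Gamma>))),
     Tm = (\<lambda>\<Gamma> (\<Gamma>', A). {((\<Gamma>'', A'), a). \<Gamma>'' = \<Gamma> \<and> \<Gamma>' = \<Gamma> \<and> A' = A \<and> JTerm \<Gamma> a A \<in> Jdg \<Sigma>}),
     esub = (\<lambda>((\<Gamma>', A), a) (\<Delta>, \<Gamma>, as). ((\<Delta>, subst_pty (sbc \<Gamma> as) A), subst_pre (sbc \<Gamma> as) a)),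
     var = (\<lambda>\<Gamma> (\<Gamma>', S). ((\<Gamma> @ [(fresh \<Gamma>, S)], S), Var (fresh \<Gamma>))),
     pair = (\<lambda>(\<Delta>, \<Gamma>, ss) ((\<Delta>', B), b) (\<Gamma>', S). (\<Delta>, \<Gamma> @ [(fresh \<Gamma>, S)], ss @ [b]))
   \<rparr>"

end

theory Submission imports Defs begin

lemma fr_gt: "finite X \<Longrightarrow> x \<in> X \<Longrightarrow> x < fr X"
proof -
  assume "finite X" "x \<in> X"
  then have "Suc x \<le> Max (insert 1 (Suc ` X))" by (intro Max_ge) auto
  then show ?thesis unfolding fr_def by simp
qed

lemma OV_take: "OV (take n \<Gamma>) = take n (OV \<Gamma>)"
  by (simp add: OV_def take_map)

lemma length_OV[simp]: "length (OV \<Gamma>) = length \<Gamma>" by (simp add: OV_def)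

lemma OV_nth: "k < length \<Gamma> \<Longrightarrow> OV \<Gamma> ! k = fst (\<Gamma> ! k)" by (simp add: OV_def)

lemma precontext_lt: "precontext \<Gamma> \<Longrightarrow> j < k \<Longrightarrow> k < length \<Gamma> \<Longrightarrow> OV \<Gamma> ! j < OV \<Gamma> ! k"
proof -
  assume p: "precontext \<Gamma>" and jk: "j < k" "k < length \<Gamma>"
  have "OV \<Gamma> ! k = fr (set (take k (OV \<Gamma>)))" using p jk unfolding precontext_def by (simp add: OV_nth)
  moreover have "OV \<Gamma> ! j \<in> set (take k (OV \<Gamma>))"
  proof -
    have "take k (OV \<Gamma>) ! j = OV \<Gamma> ! j" using jk by simp
    moreover have "j < length (take k (OV \<Gamma>))" using jk by simp
    ultimately show ?thesis by (metis nth_mem)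
  qed
  ultimately show ?thesis by (simp add: fr_gt)
qed

lemma precontext_distinct: "precontext \<Gamma> \<Longrightarrow> distinct (OV \<Gamma>)"
proof (clarsimp simp: distinct_conv_nth)
  fix i j assume p: "precontext \<Gamma>" and ij: "i < length \<Gamma>" "j < length \<Gamma>" "i \<noteq> j" "OV \<Gamma> ! i = OV \<Gamma> ! j"
  show False
  proof (cases "i < j")
    case True then show ?thesis using precontext_lt[OF p True ij(2)] ij(4) by simp
  next
    case False then have "j < i" using ij(3) by simp
    then show ?thesis using precontext_lt[OF p \<open>j < i\<close> ij(1)] ij(4) by simp
  qed
qed

lemma precontext_take: "precontext \<Gamma> \<Longrightarrow> precontext (take n \<Gamma>)"
  unfolding precontext_def OV_take by auto

lemma precontext_app: "precontext (\<Gamma> @ R) \<Longrightarrow> precontext \<Gamma>"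
  using precontext_take[of "\<Gamma>@R" "length \<Gamma>"] by simp

lemma take_Suc_fresh: "precontext \<Gamma> \<Longrightarrow> n < length \<Gamma> \<Longrightarrow>
   take (Suc n) \<Gamma> = take n \<Gamma> @ [(fresh (take n \<Gamma>), snd (\<Gamma> ! n))]"
  unfolding precontext_def fresh_def OV_take
  by (simp add: take_Suc_conv_app_nth prod_eq_iff)

lemma subst_id_pre: "subst_pre (sb xs (map Var xs)) t = t"
  by (induct t) (auto simp: sb_def map_of_zip_map intro: map_idI)

lemma subst_id_pty: "subst_pty (sb xs (map Var xs)) A = A"
  by (cases A) (simp add: subst_id_pre map_idI)

lemma subst_vars: "distinct xs \<Longrightarrow> length as = length xs \<Longrightarrow> map (subst_pre (sb xs as)) (map Var xs) = as"
  by (rule nth_equalityI) (auto simp: sb_def map_of_zip_nth)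

lemma weak: "j \<in> Jdg \<Sigma> \<Longrightarrow> (case j of JCtx _ \<Rightarrow> True
   | JType \<Delta> A \<Rightarrow> (\<forall>R. JCtx (\<Delta>@R) \<in> Jdg \<Sigma> \<longrightarrow> JType (\<Delta>@R) A \<in> Jdg \<Sigma>)
   | JTerm \<Delta> a A \<Rightarrow> (\<forall>R. JCtx (\<Delta>@R) \<in> Jdg \<Sigma> \<longrightarrow> JTerm (\<Delta>@R) a A \<in> Jdg \<Sigma>))"
proof (induct rule: Jdg.induct)
  case (R3 \<Gamma> i)
  then show ?case using Jdg.R3[of "\<Gamma>@_" \<Sigma> i] by (auto simp: nth_append)
next
  case (R4 \<Gamma> S \<Delta> as)
  show ?case
  proof (simp, intro allI impI)
    fix R assume "JCtx (\<Delta>@R) \<in> Jdg \<Sigma>"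
    then show "JType (\<Delta>@R) (PTy S as) \<in> Jdg \<Sigma>"
      apply (rule Jdg.R4[OF R4(1) _ R4(4,6)])
      using R4(7) \<open>JCtx (\<Delta>@R) \<in> Jdg \<Sigma>\<close> by simp
  qed
next
  case (R5 \<Gamma> f U \<Delta> as)
  show ?case
  proof (simp, intro allI impI)
    fix R assume "JCtx (\<Delta>@R) \<in> Jdg \<Sigma>"
    then show "JTerm (\<Delta>@R) (App f as) (subst_pty (sbc \<Gamma> as) U) \<in> Jdg \<Sigma>"
      apply (rule Jdg.R5[OF R5(1) _ R5(4,6)])
      using R5(7,9) \<open>JCtx (\<Delta>@R) \<in> Jdg \<Sigma>\<close> by simp_all
  qed
qed auto

lemma weakType: "JType \<Delta> A \<in> Jdg \<Sigma> \<Longrightarrow> JCtx (\<Delta>@R) \<in> Jdg \<Sigma> \<Longrightarrow> JType (\<Delta>@R) A \<in> Jdg \<Sigma>"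
  using weak[of "JType \<Delta> A"] by auto


section \<open>FSigma computations\<close>

lemma F_Ob: "\<Gamma> \<in> Ob (FSigma \<Sigma>) \<longleftrightarrow> precontext \<Gamma> \<and> JCtx \<Gamma> \<in> Jdg \<Sigma>"
  by (simp add: FSigma_def)
lemma F_Hom: "(\<Delta>,\<Gamma>,as) \<in> Hom (FSigma \<Sigma>) \<Delta>' \<Gamma>' \<longleftrightarrow> \<Delta>' = \<Delta> \<and> \<Gamma>' = \<Gamma> \<and> precontext \<Delta> \<and> precontext \<Gamma> \<and> cmap_in (Jdg \<Sigma>) \<Delta> \<Gamma> as"
  by (auto simp add: FSigma_def Hom_def)
lemma F_Mor: "(\<Delta>,\<Gamma>,as) \<in> Mor (FSigma \<Sigma>) \<longleftrightarrow> precontext \<Delta> \<and> precontext \<Gamma> \<and> cmap_in (Jdg \<Sigma>) \<Delta> \<Gamma> as"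
  by (auto simp add: FSigma_def)
lemma F_Ty: "(\<Gamma>',A) \<in> Ty (FSigma \<Sigma>) \<Gamma> \<longleftrightarrow> \<Gamma>' = \<Gamma> \<and> JType \<Gamma> A \<in> Jdg \<Sigma>"
  by (simp add: FSigma_def)
lemma F_Tm: "((\<Gamma>'',A'),a) \<in> Tm (FSigma \<Sigma>) \<Gamma> (\<Gamma>',A) \<longleftrightarrow> \<Gamma>'' = \<Gamma> \<and> \<Gamma>' = \<Gamma> \<and> A' = A \<and> JTerm \<Gamma> a A \<in> Jdg \<Sigma>"
  by (simp add: FSigma_def)
lemma F_tsub: "tsub (FSigma \<Sigma>) (\<Gamma>',A) (\<Delta>,\<Gamma>,as) = (\<Delta>, subst_pty (sbc \<Gamma> as) A)"
  by (simp add: FSigma_def)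
lemma F_esub: "esub (FSigma \<Sigma>) ((\<Gamma>',A),a) (\<Delta>,\<Gamma>,as) = ((\<Delta>, subst_pty (sbc \<Gamma> as) A), subst_pre (sbc \<Gamma> as) a)"
  by (simp add: FSigma_def)
lemma F_ext: "ext (FSigma \<Sigma>) \<Gamma> (\<Gamma>',A) = \<Gamma> @ [(fresh \<Gamma>, A)]"
  by (simp add: FSigma_def)
lemma F_pr: "pr (FSigma \<Sigma>) \<Gamma> (\<Gamma>',A) = (\<Gamma> @ [(fresh \<Gamma>, A)], \<Gamma>, map Var (OV \<Gamma>))"
  by (simp add: FSigma_def)
lemma F_var: "var (FSigma \<Sigma>) \<Gamma> (\<Gamma>',A) = ((\<Gamma> @ [(fresh \<Gamma>, A)], A), Var (fresh \<Gamma>))"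
  by (simp add: FSigma_def)
lemma F_pair: "pair (FSigma \<Sigma>) (\<Delta>,\<Gamma>,ss) ((\<Delta>',B),b) (\<Gamma>',A) = (\<Delta>, \<Gamma> @ [(fresh \<Gamma>, A)], ss @ [b])"
  by (simp add: FSigma_def)
lemma F_top: "top (FSigma \<Sigma>) = []"
  by (simp add: FSigma_def)

section \<open>cwf morphism facts\<close>

lemma mor_Ob: "is_cwf_mor C D N \<Longrightarrow> \<Gamma> \<in> Ob C \<Longrightarrow> Fo N \<Gamma> \<in> Ob D"
  by (simp add: is_cwf_mor_def)
lemma mor_Hom: "is_cwf_mor C D N \<Longrightarrow> f \<in> Hom C \<Delta> \<Gamma> \<Longrightarrow> Fm N f \<in> Hom D (Fo N \<Delta>) (Fo N \<Gamma>)"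
  by (simp add: is_cwf_mor_def)
lemma mor_top: "is_cwf_mor C D N \<Longrightarrow> Fo N (top C) = top D"
  by (simp add: is_cwf_mor_def)
lemma mor_tsub: "is_cwf_mor C D N \<Longrightarrow> f \<in> Hom C \<Delta> \<Gamma> \<Longrightarrow> A \<in> Ty C \<Gamma> \<Longrightarrow>
   Fs N \<Delta> (tsub C A f) = tsub D (Fs N \<Gamma> A) (Fm N f)"
  by (simp add: is_cwf_mor_def)
lemma mor_ext: "is_cwf_mor C D N \<Longrightarrow> \<Gamma> \<in> Ob C \<Longrightarrow> A \<in> Ty C \<Gamma> \<Longrightarrow>
   Fo N (ext C \<Gamma> A) = ext D (Fo N \<Gamma>) (Fs N \<Gamma> A)"
  by (simp add: is_cwf_mor_def)
lemma mor_pr: "is_cwf_mor C D N \<Longrightarrow> \<Gamma> \<in> Ob C \<Longrightarrow> A \<in> Ty C \<Gamma> \<Longrightarrow>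
   Fm N (pr C \<Gamma> A) = pr D (Fo N \<Gamma>) (Fs N \<Gamma> A)"
  by (simp add: is_cwf_mor_def)
lemma mor_esub: "is_cwf_mor C D N \<Longrightarrow> f \<in> Hom C \<Delta> \<Gamma> \<Longrightarrow> A \<in> Ty C \<Gamma> \<Longrightarrow> a \<in> Tm C \<Gamma> A \<Longrightarrow>
   Ft N \<Delta> (tsub C A f) (esub C a f) = esub D (Ft N \<Gamma> A a) (Fm N f)"
  by (simp add: is_cwf_mor_def)
lemma mor_var: "is_cwf_mor C D N \<Longrightarrow> \<Gamma> \<in> Ob C \<Longrightarrow> A \<in> Ty C \<Gamma> \<Longrightarrow>
   Ft N (ext C \<Gamma> A) (tsub C A (pr C \<Gamma> A)) (var C \<Gamma> A) = var D (Fo N \<Gamma>) (Fs N \<Gamma> A)"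
  by (simp add: is_cwf_mor_def)
lemma mor_pair: "is_cwf_mor C D N \<Longrightarrow> f \<in> Hom C \<Delta> \<Gamma> \<Longrightarrow> A \<in> Ty C \<Gamma> \<Longrightarrow> a \<in> Tm C \<Delta> (tsub C A f) \<Longrightarrow>
   Fm N (pair C f a A) = pair D (Fm N f) (Ft N \<Delta> (tsub C A f) a) (Fs N \<Gamma> A)"
  by (simp add: is_cwf_mor_def)

lemma cwf_top_unique: "is_cwf C \<Longrightarrow> X \<in> Ob C \<Longrightarrow> f \<in> Hom C X (top C) \<Longrightarrow> g \<in> Hom C X (top C) \<Longrightarrow> f = g"
proof -
  assume a: "is_cwf C" "X \<in> Ob C" "f \<in> Hom C X (top C)" "g \<in> Hom C X (top C)"
  have "\<forall>\<Gamma>\<in>Ob C. \<exists>!f. f \<in> Hom C \<Gamma> (top C)" using a(1) unfolding is_cwf_def by simp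
  then show "f = g" using a(2-4) by blast
qed


locale twomor =
  fixes \<Sigma> :: "('s, 'f) decl set"
    and C :: "('o, 'm, 't, 'e, 'z) cwf_scheme"
    and M M' :: "(('s, 'f) ctx, ('s, 'f) fmor, ('s, 'f) fty, ('s, 'f) ftm, 'o, 'm, 't, 'e) cwf_mor"
  assumes sig: "signature \<Sigma>"
    and cwfC: "is_cwf C"
    and m1: "is_cwf_mor (FSigma \<Sigma>) C M"
    and m2: "is_cwf_mor (FSigma \<Sigma>) C M'"
    and hS: "\<And>\<Gamma> S. DTy \<Gamma> S \<in> \<Sigma> \<Longrightarrow>
           Fs M \<Gamma> (\<Gamma>, PTy S (map Var (OV \<Gamma>))) = Fs M' \<Gamma> (\<Gamma>, PTy S (map Var (OV \<Gamma>)))"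
    and hU: "\<And>\<Gamma> f U. DFun \<Gamma> f U \<in> \<Sigma> \<Longrightarrow> Fs M \<Gamma> (\<Gamma>, U) = Fs M' \<Gamma> (\<Gamma>, U)"
    and hf: "\<And>\<Gamma> f U. DFun \<Gamma> f U \<in> \<Sigma> \<Longrightarrow>
           Ft M \<Gamma> (\<Gamma>, U) ((\<Gamma>, U), App f (map Var (OV \<Gamma>)))
         = Ft M' \<Gamma> (\<Gamma>, U) ((\<Gamma>, U), App f (map Var (OV \<Gamma>)))"
begin

definition ctxeq :: "('s, 'f) ctx \<Rightarrow> bool" where
  "ctxeq \<Gamma> \<longleftrightarrow>
     (\<forall>n\<le>length \<Gamma>. JCtx (take n \<Gamma>) \<in> Jdg \<Sigma> \<and> Fo M (take n \<Gamma>) = Fo M' (take n \<Gamma>))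
   \<and> (\<forall>n<length \<Gamma>. JType (take n \<Gamma>) (snd (\<Gamma>!n)) \<in> Jdg \<Sigma>
        \<and> Fs M (take n \<Gamma>) (take n \<Gamma>, snd (\<Gamma>!n)) = Fs M' (take n \<Gamma>) (take n \<Gamma>, snd (\<Gamma>!n)))
   \<and> (\<forall>i<length \<Gamma>. Ft M \<Gamma> (\<Gamma>, snd (\<Gamma>!i)) ((\<Gamma>, snd (\<Gamma>!i)), Var (fst (\<Gamma>!i)))
                   = Ft M' \<Gamma> (\<Gamma>, snd (\<Gamma>!i)) ((\<Gamma>, snd (\<Gamma>!i)), Var (fst (\<Gamma>!i))))"

lemma mor_eq:
  assumes pD: "precontext \<Delta>" and pG: "precontext \<Gamma>" and cm: "cmap_in (Jdg \<Sigma>) \<Delta> \<Gamma> as"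
    and oD: "Fo M \<Delta> = Fo M' \<Delta>" and cG: "ctxeq \<Gamma>"
    and tk: "\<forall>k<length \<Gamma>.
       Ft M \<Delta> (\<Delta>, subst_pty (sb (take k (OV \<Gamma>)) (take k as)) (snd (\<Gamma>!k)))
          ((\<Delta>, subst_pty (sb (take k (OV \<Gamma>)) (take k as)) (snd (\<Gamma>!k))), as!k)
     = Ft M' \<Delta> (\<Delta>, subst_pty (sb (take k (OV \<Gamma>)) (take k as)) (snd (\<Gamma>!k)))
          ((\<Delta>, subst_pty (sb (take k (OV \<Gamma>)) (take k as)) (snd (\<Gamma>!k))), as!k)"
  shows "Fm M (\<Delta>,\<Gamma>,as) = Fm M' (\<Delta>,\<Gamma>,as)"
proof -
  define S where "S k = subst_pty (sb (take k (OV \<Gamma>)) (take k as)) (snd (\<Gamma>!k))" for k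
  have len: "length as = length \<Gamma>" and jD: "JCtx \<Delta> \<in> Jdg \<Sigma>"
    and jt: "\<forall>k<length \<Gamma>. JTerm \<Delta> (as!k) (S k) \<in> Jdg \<Sigma>"
    using cm unfolding cmap_in_def S_def by auto
  have hom: "(\<Delta>, take n \<Gamma>, take n as) \<in> Hom (FSigma \<Sigma>) \<Delta> (take n \<Gamma>)" if "n \<le> length \<Gamma>" for n
  proof -
    have "JCtx (take n \<Gamma>) \<in> Jdg \<Sigma>" using cG that unfolding ctxeq_def by auto
    moreover have "\<forall>k<n. JTerm \<Delta> (as!k) (S k) \<in> Jdg \<Sigma>" using jt that by auto
    ultimately show ?thesis using that pD precontext_take[OF pG] jD len
      unfolding F_Hom cmap_in_def S_def by (simp add: OV_take min_def)
  qed
  have DOb: "\<Delta> \<in> Ob (FSigma \<Sigma>)" using pD jD by (simp add: F_Ob)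
  have "Fm M (\<Delta>, take n \<Gamma>, take n as) = Fm M' (\<Delta>, take n \<Gamma>, take n as)" if "n \<le> length \<Gamma>" for n
    using that
  proof (induct n)
    case 0
    have h: "(\<Delta>, [], []) \<in> Hom (FSigma \<Sigma>) \<Delta> (top (FSigma \<Sigma>))" using hom[of 0] by (simp add: F_top)
    have "Fm M (\<Delta>, [], []) \<in> Hom C (Fo M \<Delta>) (top C)"
      using mor_Hom[OF m1 h] mor_top[OF m1] by simp
    moreover have "Fm M' (\<Delta>, [], []) \<in> Hom C (Fo M \<Delta>) (top C)"
      using mor_Hom[OF m2 h] mor_top[OF m2] oD by simp
    ultimately show ?case using cwf_top_unique[OF cwfC mor_Ob[OF m1 DOb]] by simp
  next
    case (Suc n)
    then have nl: "n < length \<Gamma>" by simp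
    define f where "f = (\<Delta>, take n \<Gamma>, take n as)"
    define A where "A = (take n \<Gamma>, snd (\<Gamma>!n))"
    define a where "a = ((\<Delta>, S n), as!n)"
    have eq: "(\<Delta>, take (Suc n) \<Gamma>, take (Suc n) as) = pair (FSigma \<Sigma>) f a A"
      unfolding f_def a_def A_def F_pair using take_Suc_fresh[OF pG nl] nl len
      by (simp add: take_Suc_conv_app_nth)
    have fH: "f \<in> Hom (FSigma \<Sigma>) \<Delta> (take n \<Gamma>)" unfolding f_def using hom nl by simp
    have AT: "A \<in> Ty (FSigma \<Sigma>) (take n \<Gamma>)" using cG nl unfolding A_def ctxeq_def F_Ty by simp
    have ts: "tsub (FSigma \<Sigma>) A f = (\<Delta>, S n)"
      unfolding A_def f_def F_tsub S_def sbc_def OV_take by simp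
    have aT: "a \<in> Tm (FSigma \<Sigma>) \<Delta> (tsub (FSigma \<Sigma>) A f)"
      unfolding ts a_def F_Tm using jt nl by simp
    have "Fm M (pair (FSigma \<Sigma>) f a A) = Fm M' (pair (FSigma \<Sigma>) f a A)"
      unfolding mor_pair[OF m1 fH AT aT] mor_pair[OF m2 fH AT aT] ts
      using Suc(1) nl tk cG unfolding f_def a_def A_def S_def ctxeq_def by simp
    then show ?case using eq by simp
  qed
  from this[of "length \<Gamma>"] show ?thesis using len by simp
qed


lemma sig_DTy: "DTy \<Gamma> S \<in> \<Sigma> \<Longrightarrow> precontext \<Gamma>"
  using sig unfolding signature_def presignature_def by blast
lemma sig_DFun: "DFun \<Gamma> f U \<in> \<Sigma> \<Longrightarrow> precontext \<Gamma> \<and> JType \<Gamma> U \<in> Jdg \<Sigma>"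
  using sig unfolding signature_def presignature_def by blast

lemma id_terms: "JCtx (\<Gamma>@R) \<in> Jdg \<Sigma> \<Longrightarrow> \<forall>k<length \<Gamma>. JTerm (\<Gamma>@R) (map Var (OV \<Gamma>) ! k)
    (subst_pty (sb (take k (OV \<Gamma>)) (take k (map Var (OV \<Gamma>)))) (snd (\<Gamma>!k))) \<in> Jdg \<Sigma>"
proof (intro allI impI)
  fix k assume j: "JCtx (\<Gamma>@R) \<in> Jdg \<Sigma>" and k: "k < length \<Gamma>"
  have "JTerm (\<Gamma>@R) (Var (fst ((\<Gamma>@R)!k))) (snd ((\<Gamma>@R)!k)) \<in> Jdg \<Sigma>"
    using Jdg.R3[OF j, of k] k by simp
  then show "JTerm (\<Gamma>@R) (map Var (OV \<Gamma>) ! k)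
    (subst_pty (sb (take k (OV \<Gamma>)) (take k (map Var (OV \<Gamma>)))) (snd (\<Gamma>!k))) \<in> Jdg \<Sigma>"
    using k by (simp add: take_map subst_id_pty nth_append OV_nth)
qed

lemma main: "j \<in> Jdg \<Sigma> \<Longrightarrow> (case j of
     JCtx \<Gamma> \<Rightarrow> (precontext \<Gamma> \<longrightarrow> ctxeq \<Gamma>)
   | JType \<Delta> A \<Rightarrow> (precontext \<Delta> \<longrightarrow> Fs M \<Delta> (\<Delta>,A) = Fs M' \<Delta> (\<Delta>,A))
   | JTerm \<Delta> a A \<Rightarrow> (precontext \<Delta> \<longrightarrow> Ft M \<Delta> (\<Delta>,A) ((\<Delta>,A),a) = Ft M' \<Delta> (\<Delta>,A) ((\<Delta>,A),a)))"
proof (induct rule: Jdg.induct)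
  case R1
  show ?case using mor_top[OF m1] mor_top[OF m2] by (simp add: ctxeq_def Jdg.R1 F_top)
next
  case (R2 \<Gamma> A)
  show ?case
  proof (simp only: judg.case, intro impI)
    define \<Gamma>' where "\<Gamma>' = \<Gamma> @ [(fresh \<Gamma>, A)]"
    assume p': "precontext (\<Gamma> @ [(fresh \<Gamma>, A)])"
    then have pG: "precontext \<Gamma>" by (rule precontext_app)
    have cG: "ctxeq \<Gamma>" using R2(2) pG by simp
    have eA: "Fs M \<Gamma> (\<Gamma>,A) = Fs M' \<Gamma> (\<Gamma>,A)" using R2(4) pG by simp
    have GOb: "\<Gamma> \<in> Ob (FSigma \<Sigma>)" using pG R2(1) by (simp add: F_Ob)
    have AT: "(\<Gamma>,A) \<in> Ty (FSigma \<Sigma>) \<Gamma>" using R2(3) by (simp add: F_Ty)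
    have oG: "Fo M \<Gamma> = Fo M' \<Gamma>" using cG unfolding ctxeq_def by (metis order_refl take_all)
    have jG': "JCtx \<Gamma>' \<in> Jdg \<Sigma>" unfolding \<Gamma>'_def using R2(1,3) by (rule Jdg.R2)
    have oG': "Fo M \<Gamma>' = Fo M' \<Gamma>'"
      using mor_ext[OF m1 GOb AT] mor_ext[OF m2 GOb AT] oG eA by (simp add: F_ext \<Gamma>'_def)
    have c1: "\<forall>n\<le>length \<Gamma>'. JCtx (take n \<Gamma>') \<in> Jdg \<Sigma> \<and> Fo M (take n \<Gamma>') = Fo M' (take n \<Gamma>')"
    proof (intro allI impI)
      fix n assume n: "n \<le> length \<Gamma>'"
      show "JCtx (take n \<Gamma>') \<in> Jdg \<Sigma> \<and> Fo M (take n \<Gamma>') = Fo M' (take n \<Gamma>')"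
      proof (cases "n \<le> length \<Gamma>")
        case True then show ?thesis using cG unfolding ctxeq_def \<Gamma>'_def by simp
      next
        case False then have "take n \<Gamma>' = \<Gamma>'" using n by (simp add: \<Gamma>'_def)
        then show ?thesis using jG' oG' by simp
      qed
    qed
    have c2: "\<forall>n<length \<Gamma>'. JType (take n \<Gamma>') (snd (\<Gamma>'!n)) \<in> Jdg \<Sigma>
        \<and> Fs M (take n \<Gamma>') (take n \<Gamma>', snd (\<Gamma>'!n)) = Fs M' (take n \<Gamma>') (take n \<Gamma>', snd (\<Gamma>'!n))"
    proof (intro allI impI)
      fix n assume n: "n < length \<Gamma>'"
      show "JType (take n \<Gamma>') (snd (\<Gamma>'!n)) \<in> Jdg \<Sigma>
        \<and> Fs M (take n \<Gamma>') (take n \<Gamma>', snd (\<Gamma>'!n)) = Fs M' (take n \<Gamma>') (take n \<Gamma>', snd (\<Gamma>'!n))"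
      proof (cases "n < length \<Gamma>")
        case True then show ?thesis using cG unfolding ctxeq_def \<Gamma>'_def by (simp add: nth_append)
      next
        case False then have "n = length \<Gamma>" using n by (simp add: \<Gamma>'_def)
        then show ?thesis using R2(3) eA by (simp add: \<Gamma>'_def)
      qed
    qed
    have pH: "(\<Gamma>', \<Gamma>, map Var (OV \<Gamma>)) \<in> Hom (FSigma \<Sigma>) \<Gamma>' \<Gamma>"
      unfolding F_Hom cmap_in_def using p' pG jG' R2(1) id_terms[OF jG'[unfolded \<Gamma>'_def]]
      by (simp add: \<Gamma>'_def)
    have prM: "Fm N (\<Gamma>', \<Gamma>, map Var (OV \<Gamma>)) = pr C (Fo N \<Gamma>) (Fs N \<Gamma> (\<Gamma>,A))"
      if "is_cwf_mor (FSigma \<Sigma>) C N" for N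
      using mor_pr[OF that GOb AT] by (simp add: F_pr \<Gamma>'_def)
    have c3: "\<forall>i<length \<Gamma>'. Ft M \<Gamma>' (\<Gamma>', snd (\<Gamma>'!i)) ((\<Gamma>', snd (\<Gamma>'!i)), Var (fst (\<Gamma>'!i)))
                   = Ft M' \<Gamma>' (\<Gamma>', snd (\<Gamma>'!i)) ((\<Gamma>', snd (\<Gamma>'!i)), Var (fst (\<Gamma>'!i)))"
    proof (intro allI impI)
      fix i assume i: "i < length \<Gamma>'"
      show "Ft M \<Gamma>' (\<Gamma>', snd (\<Gamma>'!i)) ((\<Gamma>', snd (\<Gamma>'!i)), Var (fst (\<Gamma>'!i)))
                   = Ft M' \<Gamma>' (\<Gamma>', snd (\<Gamma>'!i)) ((\<Gamma>', snd (\<Gamma>'!i)), Var (fst (\<Gamma>'!i)))"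
      proof (cases "i < length \<Gamma>")
        case True
        define Ti where "Ti = (\<Gamma>, snd (\<Gamma>!i))"
        define ti where "ti = ((\<Gamma>, snd (\<Gamma>!i)), Var (fst (\<Gamma>!i)) :: 'f pre)"
        have jTi: "JType (take i \<Gamma>) (snd (\<Gamma>!i)) \<in> Jdg \<Sigma>" using cG True unfolding ctxeq_def by simp
        have "JType (take i \<Gamma> @ drop i \<Gamma>) (snd (\<Gamma>!i)) \<in> Jdg \<Sigma>"
          by (rule weakType[OF jTi]) (simp add: R2(1))
        then have TiT: "Ti \<in> Ty (FSigma \<Sigma>) \<Gamma>" unfolding Ti_def by (simp add: F_Ty)
        have tiT: "ti \<in> Tm (FSigma \<Sigma>) \<Gamma> Ti" unfolding ti_def Ti_def F_Tm
          using Jdg.R3[OF R2(1) True] by simp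
        have ts: "tsub (FSigma \<Sigma>) Ti (\<Gamma>', \<Gamma>, map Var (OV \<Gamma>)) = (\<Gamma>', snd (\<Gamma>'!i))"
          unfolding Ti_def F_tsub sbc_def using True by (simp add: subst_id_pty \<Gamma>'_def nth_append)
        have es: "esub (FSigma \<Sigma>) ti (\<Gamma>', \<Gamma>, map Var (OV \<Gamma>)) = ((\<Gamma>', snd (\<Gamma>'!i)), Var (fst (\<Gamma>'!i)))"
          unfolding ti_def F_esub sbc_def using True
          by (simp add: subst_id_pty subst_id_pre del: subst_pre.simps) (simp add: \<Gamma>'_def nth_append)
        have "Ft M \<Gamma> Ti ti = Ft M' \<Gamma> Ti ti" using cG True unfolding ctxeq_def Ti_def ti_def by simp
        then show ?thesis
          using mor_esub[OF m1 pH TiT tiT] mor_esub[OF m2 pH TiT tiT] prM[OF m1] prM[OF m2] oG eA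
          unfolding ts es by simp
      next
        case False then have "i = length \<Gamma>" using i by (simp add: \<Gamma>'_def)
        then show ?thesis
          using mor_var[OF m1 GOb AT] mor_var[OF m2 GOb AT] oG eA
          by (simp add: F_ext F_pr F_tsub F_var sbc_def subst_id_pty \<Gamma>'_def)
      qed
    qed
    show "ctxeq (\<Gamma> @ [(fresh \<Gamma>, A)])" using c1 c2 c3 unfolding ctxeq_def \<Gamma>'_def by blast
  qed
next
  case (R3 \<Gamma> i)
  then show ?case unfolding ctxeq_def by simp
next
  case (R4 \<Gamma> S \<Delta> as)
  show ?case
  proof (simp only: judg.case, intro impI)
    assume pD: "precontext \<Delta>"
    have pG: "precontext \<Gamma>" using sig_DTy[OF R4(1)] .
    have cD: "ctxeq \<Delta>" using R4(3) pD by simp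
    have cG: "ctxeq \<Gamma>" using R4(5) pG by simp
    have oD: "Fo M \<Delta> = Fo M' \<Delta>" using cD unfolding ctxeq_def by (metis order_refl take_all)
    have cm: "cmap_in (Jdg \<Sigma>) \<Delta> \<Gamma> as" unfolding cmap_in_def using R4(2,4,6,7) by blast
    have mH: "(\<Delta>,\<Gamma>,as) \<in> Hom (FSigma \<Sigma>) \<Delta> \<Gamma>" using pD pG cm by (simp add: F_Hom)
    have meq: "Fm M (\<Delta>,\<Gamma>,as) = Fm M' (\<Delta>,\<Gamma>,as)"
      by (rule mor_eq[OF pD pG cm oD cG]) (use R4(7) pD in simp)
    have "JType \<Gamma> (PTy S (map Var (OV \<Gamma>))) \<in> Jdg \<Sigma>"
      by (rule Jdg.R4[OF R4(1) R4(4) R4(4)]) (use id_terms[of \<Gamma> "[]"] R4(4) in simp_all)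
    then have T0: "(\<Gamma>, PTy S (map Var (OV \<Gamma>))) \<in> Ty (FSigma \<Sigma>) \<Gamma>" by (simp add: F_Ty)
    have ts: "tsub (FSigma \<Sigma>) (\<Gamma>, PTy S (map Var (OV \<Gamma>))) (\<Delta>,\<Gamma>,as) = (\<Delta>, PTy S as)"
      using subst_vars[OF precontext_distinct[OF pG], of as] R4(6)
      by (simp add: F_tsub sbc_def)
    show "Fs M \<Delta> (\<Delta>, PTy S as) = Fs M' \<Delta> (\<Delta>, PTy S as)"
      using mor_tsub[OF m1 mH T0] mor_tsub[OF m2 mH T0] meq hS[OF R4(1)] unfolding ts by simp
  qed
next
  case (R5 \<Gamma> f U \<Delta> as)
  show ?case
  proof (simp only: judg.case, intro impI)
    assume pD: "precontext \<Delta>"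
    have pG: "precontext \<Gamma>" and jU: "JType \<Gamma> U \<in> Jdg \<Sigma>" using sig_DFun[OF R5(1)] by auto
    have cD: "ctxeq \<Delta>" using R5(3) pD by simp
    have cG: "ctxeq \<Gamma>" using R5(5) pG by simp
    have oD: "Fo M \<Delta> = Fo M' \<Delta>" using cD unfolding ctxeq_def by (metis order_refl take_all)
    have cm: "cmap_in (Jdg \<Sigma>) \<Delta> \<Gamma> as" unfolding cmap_in_def using R5(2,4,6,7) by blast
    have mH: "(\<Delta>,\<Gamma>,as) \<in> Hom (FSigma \<Sigma>) \<Delta> \<Gamma>" using pD pG cm by (simp add: F_Hom)
    have meq: "Fm M (\<Delta>,\<Gamma>,as) = Fm M' (\<Delta>,\<Gamma>,as)"
      by (rule mor_eq[OF pD pG cm oD cG]) (use R5(7) pD in simp)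
    have TT: "(\<Gamma>, U) \<in> Ty (FSigma \<Sigma>) \<Gamma>" using jU by (simp add: F_Ty)
    have "JTerm \<Gamma> (App f (map Var (OV \<Gamma>))) (subst_pty (sbc \<Gamma> (map Var (OV \<Gamma>))) U) \<in> Jdg \<Sigma>"
      by (rule Jdg.R5[OF R5(1) R5(4) R5(4)])
         (use id_terms[of \<Gamma> "[]"] R5(4) jU in \<open>simp_all add: sbc_def subst_id_pty\<close>)
    then have tT: "((\<Gamma>, U), App f (map Var (OV \<Gamma>))) \<in> Tm (FSigma \<Sigma>) \<Gamma> (\<Gamma>, U)"
      by (simp add: F_Tm sbc_def subst_id_pty)
    have ts: "tsub (FSigma \<Sigma>) (\<Gamma>, U) (\<Delta>,\<Gamma>,as) = (\<Delta>, subst_pty (sbc \<Gamma> as) U)"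
      by (simp add: F_tsub)
    have es: "esub (FSigma \<Sigma>) ((\<Gamma>, U), App f (map Var (OV \<Gamma>))) (\<Delta>,\<Gamma>,as)
        = ((\<Delta>, subst_pty (sbc \<Gamma> as) U), App f as)"
      using subst_vars[OF precontext_distinct[OF pG], of as] R5(6)
      by (simp add: F_esub sbc_def)
    show "Ft M \<Delta> (\<Delta>, subst_pty (sbc \<Gamma> as) U) ((\<Delta>, subst_pty (sbc \<Gamma> as) U), App f as)
        = Ft M' \<Delta> (\<Delta>, subst_pty (sbc \<Gamma> as) U) ((\<Delta>, subst_pty (sbc \<Gamma> as) U), App f as)"
      using mor_esub[OF m1 mH TT tT] mor_esub[OF m2 mH TT tT] meq hf[OF R5(1)] unfolding ts es by simp
  qed
qed

end


theorem mainTheorem13: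
  fixes \<Sigma> :: "('s, 'f) decl set"
    and C :: "('o, 'm, 't, 'e, 'z) cwf_scheme"
    and M M' :: "(('s, 'f) ctx, ('s, 'f) fmor, ('s, 'f) fty, ('s, 'f) ftm, 'o, 'm, 't, 'e) cwf_mor"
  assumes "signature \<Sigma>"
    and "is_cwf C"
    and "is_cwf_mor (FSigma \<Sigma>) C M"
    and "is_cwf_mor (FSigma \<Sigma>) C M'"
    and "\<And>\<Gamma> S. DTy \<Gamma> S \<in> \<Sigma> \<Longrightarrow> Fo M \<Gamma> = Fo M' \<Gamma>"
    and "\<And>\<Gamma> f U. DFun \<Gamma> f U \<in> \<Sigma> \<Longrightarrow> Fo M \<Gamma> = Fo M' \<Gamma>"
    and "\<And>\<Gamma> S. DTy \<Gamma> S \<in> \<Sigma> \<Longrightarrow>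
           Fs M \<Gamma> (\<Gamma>, PTy S (map Var (OV \<Gamma>))) = Fs M' \<Gamma> (\<Gamma>, PTy S (map Var (OV \<Gamma>)))"
    and "\<And>\<Gamma> f U. DFun \<Gamma> f U \<in> \<Sigma> \<Longrightarrow> Fs M \<Gamma> (\<Gamma>, U) = Fs M' \<Gamma> (\<Gamma>, U)"
    and "\<And>\<Gamma> f U. DFun \<Gamma> f U \<in> \<Sigma> \<Longrightarrow>
           Ft M \<Gamma> (\<Gamma>, U) ((\<Gamma>, U), App f (map Var (OV \<Gamma>)))
         = Ft M' \<Gamma> (\<Gamma>, U) ((\<Gamma>, U), App f (map Var (OV \<Gamma>)))"
  shows "cwf_mor_eq (FSigma \<Sigma>) M M'"
proof -
  interpret twomor \<Sigma> C M M'
    using assms(1-4,7-9) by unfold_locales blast+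
  have ctx: "ctxeq \<Gamma>" if "\<Gamma> \<in> Ob (FSigma \<Sigma>)" for \<Gamma>
    using that main[of "JCtx \<Gamma>"] by (simp add: F_Ob)
  have oeq: "Fo M \<Gamma> = Fo M' \<Gamma>" if "\<Gamma> \<in> Ob (FSigma \<Sigma>)" for \<Gamma>
    using ctx[OF that] unfolding ctxeq_def by (metis order_refl take_all)
  have "\<forall>f\<in>Mor (FSigma \<Sigma>). Fm M f = Fm M' f"
  proof
    fix f assume fM: "f \<in> Mor (FSigma \<Sigma>)"
    obtain \<Delta> \<Gamma> as where f: "f = (\<Delta>, \<Gamma>, as)" by (cases f) auto
    have pD: "precontext \<Delta>" and pG: "precontext \<Gamma>" and cm: "cmap_in (Jdg \<Sigma>) \<Delta> \<Gamma> as"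
      using fM f by (auto simp: F_Mor)
    have DO: "\<Delta> \<in> Ob (FSigma \<Sigma>)" and GO: "\<Gamma> \<in> Ob (FSigma \<Sigma>)"
      using pD pG cm by (auto simp: F_Ob cmap_in_def)
    show "Fm M f = Fm M' f" unfolding f
    proof (rule mor_eq[OF pD pG cm oeq[OF DO] ctx[OF GO]], intro allI impI)
      fix k assume "k < length \<Gamma>"
      then show "Ft M \<Delta> (\<Delta>, subst_pty (sb (take k (OV \<Gamma>)) (take k as)) (snd (\<Gamma>!k)))
          ((\<Delta>, subst_pty (sb (take k (OV \<Gamma>)) (take k as)) (snd (\<Gamma>!k))), as!k)
     = Ft M' \<Delta> (\<Delta>, subst_pty (sb (take k (OV \<Gamma>)) (take k as)) (snd (\<Gamma>!k)))
          ((\<Delta>, subst_pty (sb (take k (OV \<Gamma>)) (take k as)) (snd (\<Gamma>!k))), as!k)"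
        using cm pD main[of "JTerm \<Delta> (as!k) (subst_pty (sb (take k (OV \<Gamma>)) (take k as)) (snd (\<Gamma>!k)))"]
        unfolding cmap_in_def by simp
    qed
  qed
  moreover have "\<forall>\<Gamma>\<in>Ob (FSigma \<Sigma>). \<forall>A\<in>Ty (FSigma \<Sigma>) \<Gamma>. Fs M \<Gamma> A = Fs M' \<Gamma> A"
  proof (intro ballI)
    fix \<Gamma> A assume G: "\<Gamma> \<in> Ob (FSigma \<Sigma>)" and A: "A \<in> Ty (FSigma \<Sigma>) \<Gamma>"
    obtain \<Gamma>' A' where "A = (\<Gamma>', A')" by (cases A) auto
    then show "Fs M \<Gamma> A = Fs M' \<Gamma> A" using G A main[of "JType \<Gamma> A'"] by (auto simp: F_Ob F_Ty)
  qed
  moreover have "\<forall>\<Gamma>\<in>Ob (FSigma \<Sigma>). \<forall>A\<in>Ty (FSigma \<Sigma>) \<Gamma>. \<forall>a\<in>Tm (FSigma \<Sigma>) \<Gamma> A. Ft M \<Gamma> A a = Ft M' \<Gamma> A a"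
  proof (intro ballI)
    fix \<Gamma> A a assume G: "\<Gamma> \<in> Ob (FSigma \<Sigma>)" and A: "A \<in> Ty (FSigma \<Sigma>) \<Gamma>"
      and a: "a \<in> Tm (FSigma \<Sigma>) \<Gamma> A"
    obtain \<Gamma>' A' where A1: "A = (\<Gamma>', A')" by (cases A) auto
    obtain \<Gamma>'' A'' a' where a1: "a = ((\<Gamma>'', A''), a')" by (cases a) auto
    show "Ft M \<Gamma> A a = Ft M' \<Gamma> A a" using G a main[of "JTerm \<Gamma> a' A'"] unfolding A1 a1
      by (auto simp: F_Ob F_Tm)
  qed
  ultimately show ?thesis unfolding cwf_mor_eq_def using oeq by blast
qed

end
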